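(* Let $f\in\mathbb{Q}[x]$ be a product of cyclotomic polynomials, $f=\Phi_{i_1}^{e_1}\Phi_{i_2}^{e_2}\cdots\Phi_{i_k}^{e_k}$, where the $i_j$ are distinct positive integers, the $e_j$ are positive integers, and $\Phi_n$ denotes the $n$-th cyclotomic polynomial. Then $h=(x^{\operatorname{lcm}(i_1,\dots,i_k)}-1)^{\max_j e_j}$ is a sparsest multiple of $f$: $h$ is a multiple of $f$, and no nonzero multiple of $f$ in $\mathbb{Q}[x]$ has fewer nonzero coefficients than $h$. *)

theory Defs
  imports "HOL-Analysis.Analysis" "HOL-Computational_Algebra.Polynomial"
begin

definition cyclotomic :: "nat \<Rightarrow> rat poly" where
  "cyclotomic n = (THE p. map_poly of_rat p =
     (\<Prod>k\<in>{k\<in>{1..n}. coprime k n}.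
        [:- exp (2 * of_real pi * \<i> * of_nat k / of_nat n), 1:]))"

definition nnz :: "'a::zero poly \<Rightarrow> nat" where
  "nnz p = card {i. coeff p i \<noteq> 0}"

end

theory Submission imports Defs "HOL-Computational_Algebra.Fundamental_Theorem_Algebra" begin

lemma finite_coeff_support: "finite {i. coeff (p::'a::zero poly) i \<noteq> 0}"
  by (rule finite_subset[of _ "{..degree p}"]) (auto intro: le_degree)

lemma one_plus_of_nat_nz: "(1 + of_nat i :: complex) \<noteq> 0"
  by (metis add.commute of_nat_Suc of_nat_eq_0_iff nat.simps(3))

lemma nnz_order:
  fixes G :: "complex poly"
  assumes "G \<noteq> 0" "z \<noteq> 0"
  shows "order z G + 1 \<le> nnz G"
  using assms(1)
proof (induction "order z G" arbitrary: G)
  case 0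
  then have "{i. coeff G i \<noteq> 0} \<noteq> {}" by (metis (mono_tags, lifting) empty_Collect_eq leading_coeff_0_iff)
  then have "nnz G \<noteq> 0" unfolding nnz_def using finite_coeff_support[of G] by simp
  then show ?case using 0 by simp
next
  case (Suc n G)
  obtain q where q: "G = [:- 0, 1:] ^ order 0 G * q" "\<not> [:- 0, 1:] dvd q"
    using order_decomp[OF Suc.prems] by blast
  define k where "k = order 0 G"
  have mk: "[:- 0, 1:] ^ k = (monom 1 k :: complex poly)" by (simp add: monom_altdef)
  have G: "G = monom 1 k * q" using q(1) mk k_def by simp
  have q0: "q \<noteq> 0" using G Suc.prems by auto
  have c0: "coeff q 0 \<noteq> 0" using q(2) by (simp add: dvd_iff_poly_eq_0 poly_0_coeff_0)
  have nnzG: "nnz G = nnz q"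
  proof -
    have "{i. coeff G i \<noteq> 0} = (\<lambda>i. i + k) ` {i. coeff q i \<noteq> 0}"
      unfolding G coeff_monom_mult
    proof (intro set_eqI iffI)
      fix i assume "i \<in> {i. (if i < k then 0 else 1 * coeff q (i - k)) \<noteq> 0}"
      then have "i \<ge> k" "coeff q (i - k) \<noteq> 0" by (auto split: if_splits)
      then show "i \<in> (\<lambda>i. i + k) ` {i. coeff q i \<noteq> 0}"
        by (intro image_eqI[of _ _ "i - k"]) auto
    qed auto
    then show ?thesis unfolding nnz_def by (simp add: card_image)
  qed
  have ordG: "order z G = order z q"
  proof -
    have "order z (monom 1 k :: complex poly) = 0"
      by (rule order_0I) (simp add: poly_monom assms(2))
    then show ?thesis unfolding G using q0 by (subst order_mult) auto
  qed
  have rq: "poly q z = 0" using order_root[of q z] q0 ordG Suc.hyps(2) by simp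
  have dq: "pderiv q \<noteq> 0"
  proof
    assume "pderiv q = 0"
    then have "degree q = 0" by (simp add: pderiv_eq_0_iff)
    then obtain c where "q = [:c:]" by (rule degree_eq_zeroE)
    then show False using rq c0 by simp
  qed
  have od: "order z q = Suc (order z (pderiv q))" using order_pderiv[OF q0 rq] .
  have IH: "order z (pderiv q) + 1 \<le> nnz (pderiv q)"
    using Suc.hyps(1)[of "pderiv q"] dq od ordG Suc.hyps(2) by simp
  have "{i. coeff q i \<noteq> 0} = insert 0 (Suc ` {i. coeff (pderiv q) i \<noteq> 0})"
  proof (intro set_eqI iffI)
    fix i assume "i \<in> {i. coeff q i \<noteq> 0}"
    then show "i \<in> insert 0 (Suc ` {i. coeff (pderiv q) i \<noteq> 0})"
      by (cases i) (auto simp: coeff_pderiv one_plus_of_nat_nz)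
  next
    fix i assume "i \<in> insert 0 (Suc ` {i. coeff (pderiv q) i \<noteq> 0})"
    then show "i \<in> {i. coeff q i \<noteq> 0}" using c0 by (auto simp: coeff_pderiv)
  qed
  then have "nnz q = nnz (pderiv q) + 1"
    unfolding nnz_def using finite_coeff_support[of "pderiv q"] by (simp add: card_image)
  then show ?case using IH od ordG Suc.hyps(2) nnzG by simp
qed


abbreviation RC :: "rat poly \<Rightarrow> complex poly" where "RC \<equiv> map_poly of_rat"

lemma RC_add: "RC (p + q) = RC p + RC q"
  by (rule poly_eqI) (simp add: coeff_map_poly of_rat_add)
lemma RC_diff: "RC (p - q) = RC p - RC q"
  by (rule poly_eqI) (simp add: coeff_map_poly of_rat_diff)
lemma RC_mult: "RC (p * q) = RC p * RC q"
  by (rule poly_eqI) (simp add: coeff_map_poly coeff_mult of_rat_mult of_rat_sum)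
lemma RC_1: "RC 1 = 1" by simp
lemma RC_power: "RC (p ^ n) = RC p ^ n"
  by (induction n) (simp_all add: RC_mult)
lemma RC_prod: "RC (\<Prod>i\<in>A. f i) = (\<Prod>i\<in>A. RC (f i))"
  by (induction A rule: infinite_finite_induct) (simp_all add: RC_mult)
lemma RC_monom: "RC (monom c n) = monom (of_rat c) n"
  by (rule poly_eqI) (simp add: coeff_map_poly coeff_monom)
lemma RC_eq_iff: "RC p = RC q \<longleftrightarrow> p = q"
proof
  assume "RC p = RC q"
  then have "\<And>n. coeff (RC p) n = coeff (RC q) n" by simp
  then show "p = q" by (intro poly_eqI) (simp add: coeff_map_poly)
qed simp
lemma RC_eq_0_iff: "RC p = 0 \<longleftrightarrow> p = 0"
  using RC_eq_iff[of p 0] by simp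
lemma degree_RC: "degree (RC p) = degree p"
  by (rule degree_map_poly) simp
lemma nnz_RC: "nnz (RC p) = nnz p"
  unfolding nnz_def by (simp add: coeff_map_poly)

lemma RC_div:
  assumes "P * RC B = RC A" "B \<noteq> 0"
  shows "P = RC (A div B)"
proof (rule ccontr)
  assume ne: "P \<noteq> RC (A div B)"
  have "A = B * (A div B) + A mod B" by simp
  then have "RC A = RC B * RC (A div B) + RC (A mod B)" by (metis RC_add RC_mult)
  then have eq: "RC B * (P - RC (A div B)) = RC (A mod B)"
    using assms(1) by (simp add: algebra_simps)
  have nz: "RC B * (P - RC (A div B)) \<noteq> 0" using ne assms(2) RC_eq_0_iff by simp
  then have "A mod B \<noteq> 0" using eq by auto
  then have "degree (A mod B) < degree B" using degree_mod_less[OF assms(2)] by auto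
  moreover have "degree (RC B * (P - RC (A div B))) \<ge> degree B"
    using nz by (subst degree_mult_eq) (auto simp: degree_RC)
  ultimately show False using eq degree_RC[of "A mod B"] by simp
qed

lemma RC_dvd: "RC B dvd RC A \<Longrightarrow> B dvd A"
proof -
  assume "RC B dvd RC A"
  then obtain K where K: "RC A = RC B * K" by (auto elim: dvdE)
  show "B dvd A"
  proof (cases "B = 0")
    case True then show ?thesis using K RC_eq_0_iff by simp
  next
    case False
    have "K = RC (A div B)" using RC_div[of K B A] K False by (simp add: mult.commute)
    then have "RC A = RC (B * (A div B))" using K RC_mult by simp
    then show ?thesis using RC_eq_iff by (metis dvd_triv_left)
  qed
qed

lemma coeff_pow_dvd:
  fixes L :: nat
  shows "coeff ((monom (1::'a::comm_ring_1) L - 1) ^ m) j \<noteq> 0 \<Longrightarrow> L dvd j"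
proof (induction m arbitrary: j)
  case 0 then show ?case by (cases j) auto
next
  case (Suc m)
  let ?q = "(monom (1::'a) L - 1) ^ m"
  have "coeff ((monom 1 L - 1) ^ Suc m) j = coeff (monom 1 L * ?q) j - coeff ?q j"
    by (simp add: left_diff_distrib coeff_diff)
  then have "coeff (monom 1 L * ?q) j \<noteq> 0 \<or> coeff ?q j \<noteq> 0" using Suc.prems by auto
  then show ?case
  proof
    assume "coeff (monom 1 L * ?q) j \<noteq> 0"
    then have "j \<ge> L" "coeff ?q (j - L) \<noteq> 0" unfolding coeff_monom_mult by (auto split: if_splits)
    then show ?thesis using Suc.IH[of "j - L"] by (metis dvd_diff_nat dvd_refl le_add_diff_inverse dvd_add)
  next
    assume "coeff ?q j \<noteq> 0" then show ?thesis using Suc.IH by blast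
  qed
qed

lemma nnz_h:
  fixes L :: nat assumes "L > 0"
  shows "nnz ((monom (1::rat) L - 1) ^ m) \<le> m + 1"
proof -
  let ?h = "(monom (1::rat) L - 1) ^ m"
  have dg: "degree ?h \<le> L * m"
  proof -
    have "degree (monom (1::rat) L - 1) \<le> L"
      using degree_diff_le_max[of "monom (1::rat) L" 1] by (simp add: degree_monom_eq)
    then show ?thesis using degree_power_le[of "monom (1::rat) L - 1" m]
      by (metis le_trans mult.commute mult_le_mono2)
  qed
  have "{i. coeff ?h i \<noteq> 0} \<subseteq> (\<lambda>k. L * k) ` {..m}"
  proof
    fix i assume "i \<in> {i. coeff ?h i \<noteq> 0}"
    then have c: "coeff ?h i \<noteq> 0" by simp
    then obtain k where k: "i = L * k" using coeff_pow_dvd by (metis dvdE)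
    have "i \<le> L * m" using c dg le_degree le_trans by blast
    then have "k \<le> m" using k assms by simp
    then show "i \<in> (\<lambda>k. L * k) ` {..m}" using k by auto
  qed
  then have "nnz ?h \<le> card ((\<lambda>k. L * k) ` {..m})" unfolding nnz_def by (intro card_mono) auto
  also have "\<dots> \<le> card {..m}" by (rule card_image_le) simp
  finally show ?thesis by simp
qed


definition E :: "nat \<Rightarrow> nat \<Rightarrow> complex" where
  "E n k = exp (2 * of_real pi * \<i> * of_nat k / of_nat n)"

definition P :: "nat \<Rightarrow> complex poly" where
  "P n = (\<Prod>k\<in>{k\<in>{1..n}. coprime k n}. [:- E n k, 1:])"

lemma unity_poly:
  assumes "n > 0"
  shows "(\<Prod>k\<in>{1..n}. [:- E n k, 1:]) = monom 1 n - (1 :: complex poly)"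
proof -
  define p where "p = monom 1 n - (1 :: complex poly)"
  have cn: "coeff p n = 1" using assms by (simp add: p_def)
  have dg: "degree p = n"
  proof (rule antisym)
    show "degree p \<le> n" using degree_diff_le_max[of "monom (1::complex) n" 1]
      by (simp add: p_def degree_monom_eq)
    show "n \<le> degree p" using cn by (intro le_degree) simp
  qed
  have lc: "lead_coeff p = 1" using dg cn by simp
  have pz: "poly p z = z ^ n - 1" for z by (simp add: p_def poly_monom)
  have dp: "pderiv p = monom (of_nat n) (n - 1)"
    by (simp add: p_def pderiv_diff pderiv_monom)
  have rsq: "rsquarefree p"
    unfolding rsquarefree_roots
  proof (intro allI notI)
    fix a assume "poly p a = 0 \<and> poly (pderiv p) a = 0"
    then have "a ^ n = 1" "of_nat n * a ^ (n - 1) = 0" by (auto simp: pz dp poly_monom)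
    then show False using assms by (cases "a = 0") (auto simp: power_0_left)
  qed
  have "p = smult (lead_coeff p) (\<Prod>z|poly p z = 0. [:-z, 1:])"
    using complex_poly_decompose_rsquarefree[OF rsq] by simp
  also have "\<dots> = (\<Prod>z\<in>{z. z ^ n = 1}. [:-z, 1:])" using lc by (simp add: pz)
  also have "\<dots> = (\<Prod>k\<in>{1..n}. [:- E n k, 1:])"
  proof (rule prod.reindex_bij_betw[symmetric])
    have inj: "inj_on (E n) {1..n}"
    proof
      fix j k assume jk: "j \<in> {1..n}" "k \<in> {1..n}" "E n j = E n k"
      then have "j mod n = k mod n" using complex_root_unity_eq[of n j k] assms by (simp add: E_def)
      then show "j = k" using jk(1,2)
        by (metis atLeastAtMost_iff le_neq_implies_less mod_less mod_self mod_less_divisor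
             nat_neq_iff not_one_le_zero less_one)
    qed
    have sub: "E n ` {1..n} \<subseteq> {z. z ^ n = 1}"
      using complex_root_unity[of n] assms by (auto simp: E_def)
    have c: "card (E n ` {1..n}) = n" using card_image[OF inj] by simp
    have "E n ` {1..n} = {z. z ^ n = 1}"
      by (intro card_subset_eq finite_roots_unity) (use sub c assms card_roots_unity_eq[of n] in auto)
    then show "bij_betw (E n) {1..n} {z. z ^ n = 1}" using inj by (simp add: bij_betw_def)
  qed
  finally show ?thesis by (simp add: p_def)
qed


lemma gcd_mult_div:
  fixes n d k :: nat
  assumes "d dvd n" "n > 0" "coprime k d"
  shows "gcd (k * (n div d)) n = n div d"
proof -
  have "n = d * (n div d)" using assms(1) by simp
  then have "gcd (k * (n div d)) n = gcd (k * (n div d)) (d * (n div d))" by simp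
  also have "\<dots> = gcd k d * (n div d)" by (simp add: gcd_mult_right gcd.commute[of d k])
  finally show ?thesis using assms(3) by simp
qed

lemma divisor_prod:
  assumes "n > 0"
  shows "(\<Prod>k\<in>{1..n}. [:- E n k, 1:]) = (\<Prod>d\<in>{d. d dvd n}. P d)"
proof -
  define S where "S d = {k\<in>{1..d}. coprime k d}" for d :: nat
  have fin: "finite {d. d dvd n}" using assms by simp
  have "(\<Prod>d\<in>{d. d dvd n}. P d) = (\<Prod>d\<in>{d. d dvd n}. \<Prod>k\<in>S d. [:- E d k, 1:])"
    by (simp add: P_def S_def)
  also have "\<dots> = (\<Prod>(d, k)\<in>Sigma {d. d dvd n} S. [:- E d k, 1:])"
    using fin by (subst prod.Sigma) (auto simp: S_def)
  also have "\<dots> = (\<Prod>k\<in>{1..n}. [:- E n k, 1:])"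
  proof (rule prod.reindex_bij_witness[where i = "\<lambda>b. (n div gcd b n, b div gcd b n)"
        and j = "\<lambda>(d, k). k * (n div d)"])
    fix a assume a: "a \<in> Sigma {d. d dvd n} S"
    obtain d k where dk: "a = (d, k)" by (cases a)
    have d: "d dvd n" and k: "k \<ge> 1" "k \<le> d" and cop: "coprime k d" using a dk by (auto simp: S_def)
    have dpos: "d > 0" using d assms by (metis dvd_0_left_iff gr0I less_not_refl)
    have g: "gcd (k * (n div d)) n = n div d" using gcd_mult_div[OF d assms cop] .
    have q: "n div d > 0" using d assms dpos by (simp add: div_greater_zero_iff dvd_imp_le)
    have nd: "n div (n div d) = d" using d dpos by (metis dvd_div_mult_self assms nonzero_mult_div_cancel_left
          less_not_refl2 q)
    show "(\<lambda>b. (n div gcd b n, b div gcd b n)) ((\<lambda>(d, k). k * (n div d)) a) = a"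
      using g nd q dk by simp
    show "(\<lambda>(d, k). k * (n div d)) a \<in> {1..n}"
    proof -
      have "k * (n div d) \<le> d * (n div d)" using k by simp
      also have "\<dots> = n" using d by simp
      finally show ?thesis using dk k q by (simp add: Suc_le_eq)
    qed
    have "E d k = E n (k * (n div d))"
    proof -
      have nn: "(of_nat n :: complex) = of_nat d * of_nat (n div d)" using d by (metis dvd_mult_div_cancel of_nat_mult)
      have "(of_nat (n div d) :: complex) \<noteq> 0" using q by simp
      then show ?thesis unfolding E_def using nn by (simp add: field_simps)
    qed
    then show "(\<lambda>k. [:- E n k, 1:]) ((\<lambda>(d, k). k * (n div d)) a) = (\<lambda>(d, k). [:- E d k, 1:]) a"
      using dk by simp
  next
    fix b assume b: "b \<in> {1..n}"
    define g where "g = gcd b n"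
    have gpos: "g > 0" using assms by (simp add: g_def)
    have gb: "g dvd b" "g dvd n" by (simp_all add: g_def)
    show "(\<lambda>(d, k). k * (n div d)) ((\<lambda>b. (n div gcd b n, b div gcd b n)) b) = b"
    proof -
      have n1: "n = g * (n div g)" using gb by simp
      have n2: "n div g \<noteq> 0" using gb gpos assms by (auto simp: div_greater_zero_iff dvd_imp_le)
      have "n div (n div g) = g" using n2 by (subst (1) n1) simp
      then show ?thesis using gb by (simp add: g_def[symmetric])
    qed
    have "n div g dvd n" using gb by (metis dvd_div_mult_self dvd_triv_left)
    moreover have "b div g \<ge> 1" using b gb gpos by (auto simp: div_greater_zero_iff Suc_le_eq intro: dvd_imp_le)
    moreover have "b div g \<le> n div g" using b by (simp add: div_le_mono)
    moreover have "coprime (b div g) (n div g)" unfolding g_def using assms by (intro div_gcd_coprime) simp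
    ultimately show "(\<lambda>b. (n div gcd b n, b div gcd b n)) b \<in> Sigma {d. d dvd n} S"
      by (simp add: S_def g_def)
  qed
  finally show ?thesis by simp
qed


lemma P_nz: "P n \<noteq> 0"
  unfolding P_def by (subst prod_zero_iff) auto

lemma cyc_RC: "RC (cyclotomic n) = P n"
proof (induction n rule: less_induct)
  case (less n)
  have ex: "\<exists>q. RC q = P n"
  proof (cases "n = 0")
    case True
    then have "P n = 1" by (simp add: P_def)
    then show ?thesis by (intro exI[of _ 1]) simp
  next
    case False
    define D where "D = {d. d dvd n \<and> d < n}"
    define B where "B = (\<Prod>d\<in>D. cyclotomic d)"
    have finD: "finite D" unfolding D_def by simp
    have RB: "RC B = (\<Prod>d\<in>D. P d)" unfolding B_def RC_prod
      by (intro prod.cong refl) (simp add: less.IH D_def)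
    have Bnz: "B \<noteq> 0" using RB P_nz finD RC_eq_0_iff[of B] by (auto simp: prod_zero_iff)
    have Dn: "{d. d dvd n} = insert n D" "n \<notin> D" using False
      by (auto simp: D_def dest: dvd_imp_le)
    have "monom 1 n - 1 = (\<Prod>d\<in>{d. d dvd n}. P d)"
      using unity_poly[of n] divisor_prod[of n] False by simp
    also have "\<dots> = P n * RC B" using Dn finD RB by simp
    finally have "P n * RC B = RC (monom 1 n - 1)" by (simp add: RC_diff RC_monom)
    then have "P n = RC ((monom 1 n - 1) div B)" by (rule RC_div[OF _ Bnz])
    then show ?thesis by (intro exI[of _ "(monom 1 n - 1) div B"]) simp
  qed
  then obtain q where q: "RC q = P n" by blast
  have u: "\<exists>!p. RC p = P n"
  proof (rule ex1I[of _ q])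
    show "RC q = P n" by (rule q)
    fix p assume "RC p = P n" then show "p = q" using q RC_eq_iff by metis
  qed
  have "cyclotomic n = q"
    unfolding cyclotomic_def
  proof (rule the1_equality)
    show "\<exists>!p. map_poly of_rat p = (\<Prod>k\<in>{k \<in> {1..n}. coprime k n}. [:- exp (2 * complex_of_real pi * \<i> * of_nat k / of_nat n), 1:])"
      using u by (simp add: P_def E_def)
    show "map_poly of_rat q = (\<Prod>k\<in>{k \<in> {1..n}. coprime k n}. [:- exp (2 * complex_of_real pi * \<i> * of_nat k / of_nat n), 1:])"
      using q by (simp add: P_def E_def)
  qed
  then show ?case using q by simp
qed

theorem corollary4p2:
  fixes I :: "nat set" and e :: "nat \<Rightarrow> nat" and f h :: "rat poly"
  assumes "finite I" and "I \<noteq> {}" and "0 \<notin> I"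
    and "\<forall>i\<in>I. e i > 0"
    and "f = (\<Prod>i\<in>I. cyclotomic i ^ e i)"
    and "h = (monom 1 (Lcm I) - 1) ^ (Max (e ` I))"
  shows "f dvd h \<and> (\<forall>g :: rat poly. g \<noteq> 0 \<and> f dvd g \<longrightarrow> nnz h \<le> nnz g)"
proof -
  define L where "L = Lcm I"
  define m where "m = Max (e ` I)"
  have "L \<noteq> 0" using assms(1,3) Lcm_0_iff[of I] by (simp add: L_def)
  then have Lpos: "L > 0" by simp
  have Rf: "RC f = (\<Prod>i\<in>I. P i ^ e i)" using assms(5) by (simp add: RC_prod RC_power cyc_RC)
  have Rh: "RC h = (\<Prod>d\<in>{d. d dvd L}. P d ^ m)"
  proof -
    have "RC h = (monom 1 L - 1) ^ m" using assms(6) by (simp add: L_def m_def RC_power RC_diff RC_monom)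
    also have "\<dots> = (\<Prod>d\<in>{d. d dvd L}. P d) ^ m"
      using unity_poly[OF Lpos] divisor_prod[OF Lpos] by simp
    finally show ?thesis by (simp add: prod_power_distrib)
  qed
  have em: "\<And>i. i \<in> I \<Longrightarrow> e i \<le> m" using assms(1) by (simp add: m_def)
  have "(\<Prod>i\<in>I. P i ^ e i) dvd (\<Prod>i\<in>I. P i ^ m)"
    by (intro prod_dvd_prod le_imp_power_dvd em)
  also have "\<dots> dvd (\<Prod>d\<in>{d. d dvd L}. P d ^ m)"
    using Lpos by (intro prod_dvd_prod_subset) (auto simp: L_def)
  finally have "RC f dvd RC h" using Rf Rh by simp
  then have part1: "f dvd h" by (rule RC_dvd)
  have "m \<in> e ` I" using Max_in[of "e ` I"] assms(1,2) by (simp add: m_def)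
  then obtain i0 where i0: "i0 \<in> I" "e i0 = m" by auto
  have i0pos: "i0 > 0" using i0 assms(3) by (cases i0) auto
  define z where "z = E i0 1"
  have znz: "z \<noteq> 0" by (simp add: z_def E_def)
  have "[:-z, 1:] dvd P i0" unfolding P_def z_def
    by (rule dvd_prodI) (use i0pos in auto)
  then have "[:-z, 1:] ^ m dvd P i0 ^ e i0" using i0 by (simp add: dvd_power_same)
  also have "\<dots> dvd RC f" unfolding Rf using assms(1) i0 by (intro dvd_prodI)
  finally have zf: "[:-z, 1:] ^ m dvd RC f" .
  have part2: "nnz h \<le> nnz g" if g: "g \<noteq> 0" "f dvd g" for g
  proof -
    have "RC f dvd RC g" using g(2) by (auto simp: RC_mult elim!: dvdE)
    then have "[:-z, 1:] ^ m dvd RC g" using zf dvd_trans by blast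
    moreover have Rg: "RC g \<noteq> 0" using g(1) RC_eq_0_iff by simp
    ultimately have "m \<le> order z (RC g)" by (simp add: order_divides)
    then have "m + 1 \<le> nnz g" using nnz_order[OF Rg znz] nnz_RC by simp
    moreover have "nnz h \<le> m + 1" using nnz_h[OF Lpos, of m] assms(6) by (simp add: L_def m_def)
    ultimately show ?thesis by simp
  qed
  show ?thesis using part1 part2 by blast
qed

end
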